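(* Let $G$ be a group and $H$ a subnormal subgroup of $G$. Then for every subgroup $K \leqslant G$ of finite index, $|HK:K|$ divides $|G:K|$.
   Context: For subgroups $H,K$ of a group $G$, $|HK:K|$ denotes the number of cosets of $K$ that intersect $H$ (equivalently $|H : H \cap K|$). $H$ is subnormal in $G$ if there is a finite chain $H = H_0 \lhd H_1 \lhd \dots \lhd H_r = G$. *)

theory Defs
  imports "HOL-Algebra.Algebra"
begin

inductive subnormal :: "('a, 'b) monoid_scheme \<Rightarrow> 'a set \<Rightarrow> bool"
  for G where
  subnormal_top: "subnormal G (carrier G)"
| subnormal_step: "subnormal G L \<Longrightarrow> subgroup L G \<Longrightarrow>
     normal H (G\<lparr>carrier := L\<rparr>) \<Longrightarrow> subnormal G H"

text \<open>|HK:K|: the number of (left) cosets of K that intersect H,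
  i.e. the number of cosets h K with h in H.\<close>
definition rel_index :: "('a, 'b) monoid_scheme \<Rightarrow> 'a set \<Rightarrow> 'a set \<Rightarrow> nat" where
  "rel_index G H K = card ((\<lambda>h. h <#\<^bsub>G\<^esub> K) ` H)"

end

theory Submission
  imports Defs
begin

context group
begin

lemma lr_normal:
  assumes HL: "normal H (G\<lparr>carrier := L\<rparr>)" and l: "l \<in> L"
  shows "H #> l = l <#\<^bsub>G\<^esub> H"
proof -
  have "H #>\<^bsub>G\<lparr>carrier := L\<rparr>\<^esub> l = l <#\<^bsub>G\<lparr>carrier := L\<rparr>\<^esub> H"
    using normal.coset_eq[OF HL] l by simp
  thus ?thesis by (simp add: r_coset_def l_coset_def)
qed

lemma key:
  assumes L: "subgroup L G" and HL: "normal H (G\<lparr>carrier := L\<rparr>)"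
    and K: "subgroup K G" and fin: "finite ((\<lambda>l. l <#\<^bsub>G\<^esub> K) ` L)"
  shows "card ((\<lambda>h. h <#\<^bsub>G\<^esub> K) ` H) dvd card ((\<lambda>l. l <#\<^bsub>G\<^esub> K) ` L)"
proof -
  have HsubL: "subgroup H (G\<lparr>carrier := L\<rparr>)" using HL normal.axioms(1) by blast
  have H: "subgroup H G" using incl_subgroup[OF L HsubL] .
  have HL': "H \<subseteq> L" using subgroup.subset[OF HsubL] by simp
  have Lc: "L \<subseteq> carrier G" using subgroup.subset[OF L] .
  have Hc: "H \<subseteq> carrier G" using subgroup.subset[OF H] .
  have Kc: "K \<subseteq> carrier G" using subgroup.subset[OF K] .
  define O0 where "O0 = (\<lambda>h. h <#\<^bsub>G\<^esub> K) ` H"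
  define T where "T = (\<lambda>l. (\<lambda>h. (h \<otimes> l) <#\<^bsub>G\<^esub> K) ` H)"
  define XX where "XX = (\<lambda>l. l <#\<^bsub>G\<^esub> K) ` L"
  have Tl: "T l = (\<lambda>C. l <#\<^bsub>G\<^esub> C) ` O0" if l: "l \<in> L" for l
  proof -
    have lc: "l \<in> carrier G" using l Lc by blast
    have "T l = (\<lambda>x. x <#\<^bsub>G\<^esub> K) ` (H #> l)"
      unfolding T_def r_coset_def by auto
    also have "\<dots> = (\<lambda>x. x <#\<^bsub>G\<^esub> K) ` (l <#\<^bsub>G\<^esub> H)" using lr_normal[OF HL l] by simp
    also have "\<dots> = (\<lambda>h. (l \<otimes> h) <#\<^bsub>G\<^esub> K) ` H" unfolding l_coset_def by auto
    also have "\<dots> = (\<lambda>h. l <#\<^bsub>G\<^esub> (h <#\<^bsub>G\<^esub> K)) ` H"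
      using lcos_m_assoc[OF Kc lc] Hc by (intro image_cong) auto
    finally show ?thesis unfolding O0_def by auto
  qed
  have cardT: "card (T l) = card O0" if l: "l \<in> L" for l
  proof -
    have lc: "l \<in> carrier G" using l Lc by blast
    have "inj_on (\<lambda>C. l <#\<^bsub>G\<^esub> C) O0"
    proof (rule inj_on_inverseI[where g = "\<lambda>C. inv l <#\<^bsub>G\<^esub> C"])
      fix C assume "C \<in> O0"
      then obtain h where h: "h \<in> H" "C = h <#\<^bsub>G\<^esub> K" unfolding O0_def by auto
      have Cc: "C \<subseteq> carrier G" using h Hc Kc l_coset_subset_G by blast
      show "inv l <#\<^bsub>G\<^esub> (l <#\<^bsub>G\<^esub> C) = C"
        using Cc lc by (simp add: lcos_m_assoc l_inv lcos_mult_one)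
    qed
    thus ?thesis using Tl[OF l] by (simp add: card_image)
  qed
  have TsubX: "T l \<subseteq> XX" if l: "l \<in> L" for l
    unfolding T_def XX_def using l HL' subgroup.m_closed[OF L] by blast
  have UT: "\<Union> (T ` L) = XX"
  proof
    show "\<Union> (T ` L) \<subseteq> XX" using TsubX by blast
    show "XX \<subseteq> \<Union> (T ` L)"
    proof
      fix C assume "C \<in> XX"
      then obtain l where l: "l \<in> L" "C = l <#\<^bsub>G\<^esub> K" unfolding XX_def by auto
      have "C = (\<one> \<otimes> l) <#\<^bsub>G\<^esub> K" using l Lc by auto
      moreover have "\<one> \<in> H" using subgroup.one_closed[OF H] .
      ultimately have "C \<in> T l" unfolding T_def by blast
      thus "C \<in> \<Union> (T ` L)" using l by blast
    qed
  qed
  have Tsub: "T l \<subseteq> T l'" if l: "l \<in> L" and l': "l' \<in> L" and C: "C \<in> T l" "C \<in> T l'" for l l' C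
  proof
    fix D assume "D \<in> T l"
    then obtain h where h: "h \<in> H" "D = (h \<otimes> l) <#\<^bsub>G\<^esub> K" unfolding T_def by auto
    obtain h1 where h1: "h1 \<in> H" "C = (h1 \<otimes> l) <#\<^bsub>G\<^esub> K" using C(1) unfolding T_def by auto
    obtain h2 where h2: "h2 \<in> H" "C = (h2 \<otimes> l') <#\<^bsub>G\<^esub> K" using C(2) unfolding T_def by auto
    have lc: "l \<in> carrier G" "l' \<in> carrier G" using l l' Lc by auto
    have hc: "h \<in> carrier G" "h1 \<in> carrier G" "h2 \<in> carrier G" using h h1 h2 Hc by auto
    have "D = (h \<otimes> inv h1) <#\<^bsub>G\<^esub> ((h1 \<otimes> l) <#\<^bsub>G\<^esub> K)"
    proof -
      have e: "h \<otimes> inv h1 \<otimes> (h1 \<otimes> l) = h \<otimes> l"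
      proof -
        have "inv h1 \<otimes> (h1 \<otimes> l) = l" using hc lc by (simp add: m_assoc[symmetric])
        thus ?thesis using hc lc by (simp add: m_assoc)
      qed
      have "(h \<otimes> inv h1) <#\<^bsub>G\<^esub> ((h1 \<otimes> l) <#\<^bsub>G\<^esub> K) = (h \<otimes> inv h1 \<otimes> (h1 \<otimes> l)) <#\<^bsub>G\<^esub> K"
        using hc lc Kc by (simp add: lcos_m_assoc)
      thus ?thesis using e h(2) by simp
    qed
    also have "\<dots> = (h \<otimes> inv h1) <#\<^bsub>G\<^esub> ((h2 \<otimes> l') <#\<^bsub>G\<^esub> K)" using h1 h2 by simp
    also have "\<dots> = ((h \<otimes> inv h1 \<otimes> h2) \<otimes> l') <#\<^bsub>G\<^esub> K"
      using lc hc Kc by (simp add: lcos_m_assoc m_assoc)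
    finally have "D = ((h \<otimes> inv h1 \<otimes> h2) \<otimes> l') <#\<^bsub>G\<^esub> K" .
    moreover have "h \<otimes> inv h1 \<otimes> h2 \<in> H"
      using h h1 h2 H by (simp add: subgroup.m_closed subgroup.m_inv_closed)
    ultimately show "D \<in> T l'" unfolding T_def by blast
  qed
  have finX: "finite XX" using fin unfolding XX_def .
  have finTL: "finite (T ` L)"
  proof (rule finite_subset[OF _ finite_Pow_iff[THEN iffD2, OF finX]])
    show "T ` L \<subseteq> Pow XX" using TsubX by blast
  qed
  have finU: "finite (\<Union> (T ` L))" using UT finX by simp
  have cT: "\<forall>c\<in>T ` L. card c = card O0" using cardT by blast
  have disj: "\<forall>c1\<in>T ` L. \<forall>c2\<in>T ` L. c1 \<noteq> c2 \<longrightarrow> c1 \<inter> c2 = {}"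
    proof (intro ballI impI)
      fix c1 c2 assume "c1 \<in> T ` L" "c2 \<in> T ` L" "c1 \<noteq> c2"
      then obtain l l' where "l \<in> L" "l' \<in> L" "c1 = T l" "c2 = T l'" "T l \<noteq> T l'" by auto
      thus "c1 \<inter> c2 = {}" using Tsub by blast
    qed
  have "card O0 * card (T ` L) = card (\<Union> (T ` L))"
    by (rule card_partition[OF finTL finU]) (use cT disj in blast)+
  hence "card XX = card O0 * card (T ` L)" using UT by simp
  thus ?thesis unfolding XX_def O0_def by simp
qed

lemma lcard_eq:
  assumes K: "subgroup K G"
  shows "card ((\<lambda>g. g <#\<^bsub>G\<^esub> K) ` carrier G) = card (rcosets K)"
proof -
  have Kc: "K \<subseteq> carrier G" using subgroup.subset[OF K] .
  have img: "(\<lambda>x. inv x) ` (g <#\<^bsub>G\<^esub> K) = K #> inv g" if g: "g \<in> carrier G" for g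
  proof
    show "(\<lambda>x. inv x) ` (g <#\<^bsub>G\<^esub> K) \<subseteq> K #> inv g"
    proof
      fix x assume "x \<in> (\<lambda>x. inv x) ` (g <#\<^bsub>G\<^esub> K)"
      then obtain k where k: "k \<in> K" "x = inv (g \<otimes> k)" unfolding l_coset_def by auto
      have kc: "k \<in> carrier G" using k Kc by auto
      have "x = inv k \<otimes> inv g" using k g kc by (simp add: inv_mult_group)
      moreover have "inv k \<in> K" using k subgroup.m_inv_closed[OF K] by auto
      ultimately show "x \<in> K #> inv g" unfolding r_coset_def by auto
    qed
    show "K #> inv g \<subseteq> (\<lambda>x. inv x) ` (g <#\<^bsub>G\<^esub> K)"
    proof
      fix x assume "x \<in> K #> inv g"
      then obtain k where k: "k \<in> K" "x = k \<otimes> inv g" unfolding r_coset_def by auto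
      have kc: "k \<in> carrier G" using k Kc by auto
      have "x = inv (g \<otimes> inv k)" using k g kc by (simp add: inv_mult_group)
      moreover have "g \<otimes> inv k \<in> g <#\<^bsub>G\<^esub> K"
        unfolding l_coset_def using k subgroup.m_inv_closed[OF K] by auto
      ultimately show "x \<in> (\<lambda>x. inv x) ` (g <#\<^bsub>G\<^esub> K)" by blast
    qed
  qed
  have "(\<lambda>C. (\<lambda>x. inv x) ` C) ` ((\<lambda>g. g <#\<^bsub>G\<^esub> K) ` carrier G) = rcosets K"
  proof
    show "(\<lambda>C. (\<lambda>x. inv x) ` C) ` ((\<lambda>g. g <#\<^bsub>G\<^esub> K) ` carrier G) \<subseteq> rcosets K"
      unfolding RCOSETS_def using img by auto
    show "rcosets K \<subseteq> (\<lambda>C. (\<lambda>x. inv x) ` C) ` ((\<lambda>g. g <#\<^bsub>G\<^esub> K) ` carrier G)"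
    proof
      fix R assume "R \<in> rcosets K"
      then obtain a where a: "a \<in> carrier G" "R = K #> a" unfolding RCOSETS_def by auto
      have "R = (\<lambda>x. inv x) ` (inv a <#\<^bsub>G\<^esub> K)" using img[of "inv a"] a by simp
      moreover have "inv a \<in> carrier G" using a by simp
      ultimately show "R \<in> (\<lambda>C. (\<lambda>x. inv x) ` C) ` ((\<lambda>g. g <#\<^bsub>G\<^esub> K) ` carrier G)" by blast
    qed
  qed
  moreover have "inj_on (\<lambda>C. (\<lambda>x. inv x) ` C) ((\<lambda>g. g <#\<^bsub>G\<^esub> K) ` carrier G)"
  proof (rule inj_on_inverseI[where g = "\<lambda>C. (\<lambda>x. inv x) ` C"])
    fix C assume "C \<in> (\<lambda>g. g <#\<^bsub>G\<^esub> K) ` carrier G"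
    hence "C \<subseteq> carrier G" using l_coset_subset_G Kc by blast
    hence "(\<lambda>x. inv x) ` (\<lambda>x. inv x) ` C = (\<lambda>x. x) ` C"
      unfolding image_image by (intro image_cong) auto
    thus "(\<lambda>x. inv x) ` (\<lambda>x. inv x) ` C = C" by simp
  qed
  ultimately show ?thesis by (metis card_image)
qed

end

theorem proposition1p3:
  fixes G (structure) and H K :: "'a set"
  assumes "group G"
    and "subnormal G H"
    and "subgroup K G"
    and "finite (rcosets K)"
  shows "rel_index G H K dvd card (rcosets K)"
proof -
  interpret group G by fact
  have Kc: "K \<subseteq> carrier G" using subgroup.subset[OF assms(3)] .
  have eq: "card ((\<lambda>g. g <#\<^bsub>G\<^esub> K) ` carrier G) = card (rcosets K)"
    using lcard_eq[OF assms(3)] .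
  have finG: "finite ((\<lambda>g. g <#\<^bsub>G\<^esub> K) ` carrier G)"
  proof (rule ccontr)
    assume "infinite ((\<lambda>g. g <#\<^bsub>G\<^esub> K) ` carrier G)"
    hence "card (rcosets K) = 0" using eq by simp
    moreover have "rcosets K \<noteq> {}" unfolding RCOSETS_def by auto
    ultimately show False using assms(4) by simp
  qed
  have "subgroup H G \<and> card ((\<lambda>h. h <#\<^bsub>G\<^esub> K) ` H) dvd card ((\<lambda>g. g <#\<^bsub>G\<^esub> K) ` carrier G)"
    using assms(2)
  proof (induction rule: subnormal.induct)
    case subnormal_top
    show ?case by (simp add: subgroup_self)
  next
    case (subnormal_step L H)
    have finL: "finite ((\<lambda>l. l <#\<^bsub>G\<^esub> K) ` L)"
      by (rule finite_subset[OF _ finG]) (use subgroup.subset[OF subnormal_step.hyps(2)] in blast)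
    have HsubL: "subgroup H (G\<lparr>carrier := L\<rparr>)" using subnormal_step.hyps(3) normal.axioms(1) by blast
    have "subgroup H G" using incl_subgroup[OF subnormal_step.hyps(2) HsubL] .
    moreover have "card ((\<lambda>h. h <#\<^bsub>G\<^esub> K) ` H) dvd card ((\<lambda>l. l <#\<^bsub>G\<^esub> K) ` L)"
      using key[OF subnormal_step.hyps(2) subnormal_step.hyps(3) assms(3) finL] .
    ultimately show ?case using subnormal_step.IH dvd_trans by blast
  qed
  thus ?thesis unfolding rel_index_def using eq by simp
qed

end
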